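(* Let $\mathcal{H}=(\mathcal{V},\mathcal{E})$ be a connected hypergraph with a vertex $w$ and two proper subsets $\mathcal{V}_1,\mathcal{V}_2$ of $\mathcal{V}$ such that $\mathcal{V}_1\cup\mathcal{V}_2=\mathcal{V}$, $\mathcal{V}_1\cap\mathcal{V}_2=\{w\}$, and every $e\in\mathcal{E}$ satisfies $w\in e$ or $e\subseteq\mathcal{V}_i$ for some $i\in\{1,2\}$. Let $\mathcal{I}_{(\mathcal{V}_1,\mathcal{V}_2)}(\mathcal{H})$ be the set of those $\mathcal{V}_0\in\mathcal{I}(\mathcal{H})$ with $\mathcal{V}_i\subseteq\mathcal{V}_0$ for some $i\in\{1,2\}$. Then $(\lambda-1)^2$ divides $P(\mathcal{H},\lambda)$ if and only if $\lambda^2$ divides the polynomial $\sum_{\mathcal{V}_0\in\mathcal{I}_{(\mathcal{V}_1,\mathcal{V}_2)}(\mathcal{H})}P(\mathcal{H}-\mathcal{V}_0,\lambda)$.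
   Context: A hypergraph $\mathcal{H}=(\mathcal{V},\mathcal{E})$ consists of a finite vertex set $\mathcal{V}$ and a set $\mathcal{E}$ of subsets of $\mathcal{V}$, each of size at least $1$, called edges. For a positive integer $\lambda$, a weak proper $\lambda$-colouring of $\mathcal{H}$ is a map $\phi:\mathcal{V}\to\{1,\dots,\lambda\}$ such that $|\{\phi(v):v\in e\}|>1$ for every $e\in\mathcal{E}$. $P(\mathcal{H},\lambda)$ denotes the number of weak proper $\lambda$-colourings; it is a polynomial in $\lambda$ (equal to $1$ for the hypergraph with no vertices). $\mathcal{H}$ is connected if for any two vertices $v_1,v_2$ there is a sequence of edges $e_0,\dots,e_k$ with $v_1\in e_0$, $v_2\in e_k$, $e_i\cap e_{i+1}\ne\emptyset$. For $\mathcal{V}_0\subseteq\mathcal{V}$, $\mathcal{H}[\mathcal{V}_0]$ has vertex set $\mathcal{V}_0$ and edge set $\{e\in\mathcal{E}:e\subseteq\mathcal{V}_0\}$; $\mathcal{H}-\mathcal{V}_0=\mathcal{H}[\mathcal{V}\setminus\mathcal{V}_0]$; $\mathcal{I}(\mathcal{H})$ is the set of subsets $\mathcal{V}_0\subseteq\mathcal{V}$ such that $\mathcal{H}[\mathcal{V}_0]$ has no edges. *)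

theory Defs
  imports "HOL-Library.FuncSet" "HOL-Computational_Algebra.Polynomial"
begin

definition hypergraph :: "'a set \<Rightarrow> 'a set set \<Rightarrow> bool" where
  "hypergraph V E \<longleftrightarrow> finite V \<and> (\<forall>e\<in>E. e \<subseteq> V \<and> e \<noteq> {})"

definition hg_connected :: "'a set \<Rightarrow> 'a set set \<Rightarrow> bool" where
  "hg_connected V E \<longleftrightarrow>
     (\<forall>v1\<in>V. \<forall>v2\<in>V. \<exists>es. es \<noteq> [] \<and> set es \<subseteq> E \<and> v1 \<in> hd es \<and> v2 \<in> last es \<and>
        (\<forall>i. Suc i < length es \<longrightarrow> es ! i \<inter> es ! Suc i \<noteq> {}))"

definition weak_colourings :: "'a set \<Rightarrow> 'a set set \<Rightarrow> nat \<Rightarrow> ('a \<Rightarrow> nat) set" where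
  "weak_colourings V E n = {\<phi> \<in> V \<rightarrow>\<^sub>E {1..n}. \<forall>e\<in>E. card (\<phi> ` e) > 1}"

definition chrom_poly :: "'a set \<Rightarrow> 'a set set \<Rightarrow> int poly" where
  "chrom_poly V E = (THE p. \<forall>n::nat. n \<ge> 1 \<longrightarrow> poly p (int n) = int (card (weak_colourings V E n)))"

definition induced_edges :: "'a set set \<Rightarrow> 'a set \<Rightarrow> 'a set set" where
  "induced_edges E V0 = {e \<in> E. e \<subseteq> V0}"

definition indep_sets :: "'a set \<Rightarrow> 'a set set \<Rightarrow> 'a set set" where
  "indep_sets V E = {V0. V0 \<subseteq> V \<and> induced_edges E V0 = {}}"

end

theory Submission
  imports Defs
begin


lemma wc_finite: "finite V \<Longrightarrow> finite (weak_colourings V E n)"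
  unfolding weak_colourings_def by (rule finite_subset[of _ "V \<rightarrow>\<^sub>E {1..n}"]) (auto intro: finite_PiE)

lemma indep_finite: "finite V \<Longrightarrow> finite (indep_sets V E)"
  unfolding indep_sets_def by (rule finite_subset[of _ "Pow V"]) auto

lemma colour_split:
  assumes fin: "finite V" and sub: "\<forall>e\<in>E. e \<subseteq> V"
  shows "card {\<phi> \<in> weak_colourings V E (Suc n). P {x\<in>V. \<phi> x = Suc n}} =
     (\<Sum>S\<in>{S\<in>indep_sets V E. P S}. card (weak_colourings (V - S) (induced_edges E (V - S)) n))"
proof -
  let ?A = "SIGMA S:{S\<in>indep_sets V E. P S}. weak_colourings (V - S) (induced_edges E (V - S)) n"
  let ?B = "{\<phi> \<in> weak_colourings V E (Suc n). P {x\<in>V. \<phi> x = Suc n}}"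
  define f where "f = (\<lambda>(S, \<psi>::'a\<Rightarrow>nat). (\<lambda>x. if x \<in> S then Suc n else \<psi> x))"
  define g where "g = (\<lambda>\<phi>::'a\<Rightarrow>nat. ({x\<in>V. \<phi> x = Suc n}, restrict \<phi> (V - {x\<in>V. \<phi> x = Suc n})))"
  have "bij_betw f ?A ?B"
  proof (rule bij_betw_byWitness[where f'=g])
    show "\<forall>a\<in>?A. g (f a) = a"
    proof
      fix a assume a: "a \<in> ?A"
      obtain S \<psi> where aa: "a = (S, \<psi>)" by force
      have S: "S \<subseteq> V" and \<psi>: "\<psi> \<in> (V - S) \<rightarrow>\<^sub>E {1..n}"
        using a aa by (auto simp: indep_sets_def weak_colourings_def)
      have 1: "{x\<in>V. (if x \<in> S then Suc n else \<psi> x) = Suc n} = S"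
        using S \<psi> by (auto simp: PiE_def Pi_def)
      show "g (f a) = a" unfolding aa f_def g_def using 1 \<psi>
        by (auto simp: fun_eq_iff restrict_def PiE_def extensional_def)
    qed
    show "\<forall>a\<in>?B. f (g a) = a"
    proof
      fix \<phi> assume "\<phi> \<in> ?B"
      then have "\<phi> \<in> V \<rightarrow>\<^sub>E {1..Suc n}" by (auto simp: weak_colourings_def)
      then show "f (g \<phi>) = \<phi>" unfolding f_def g_def
        by (auto simp: fun_eq_iff restrict_def PiE_def extensional_def)
    qed
    show "f ` ?A \<subseteq> ?B"
    proof
      fix \<phi> assume "\<phi> \<in> f ` ?A"
      then obtain S \<psi> where S: "S \<in> indep_sets V E" "P S" and
        \<psi>: "\<psi> \<in> weak_colourings (V - S) (induced_edges E (V - S)) n" and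
        \<phi>: "\<phi> = (\<lambda>x. if x \<in> S then Suc n else \<psi> x)" by (auto simp: f_def)
      have SV: "S \<subseteq> V" and Sind: "\<forall>e\<in>E. \<not> e \<subseteq> S" using S by (auto simp: indep_sets_def induced_edges_def)
      have \<psi>1: "\<psi> \<in> (V - S) \<rightarrow>\<^sub>E {1..n}" and \<psi>2: "\<forall>e\<in>E. e \<subseteq> V - S \<longrightarrow> card (\<psi> ` e) > 1"
        using \<psi> by (auto simp: weak_colourings_def induced_edges_def)
      have 1: "{x\<in>V. \<phi> x = Suc n} = S"
        using SV \<psi>1 by (auto simp: \<phi> PiE_def Pi_def)
      have 2: "\<phi> \<in> V \<rightarrow>\<^sub>E {1..Suc n}" using SV \<psi>1 by (auto simp: \<phi> PiE_def Pi_def extensional_def)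
      have 3: "card (\<phi> ` e) > 1" if e: "e \<in> E" for e
      proof (cases "e \<subseteq> V - S")
        case True
        then have "\<phi> ` e = \<psi> ` e" by (auto simp: \<phi>)
        then show ?thesis using \<psi>2 e True by simp
      next
        case False
        then obtain y where y: "y \<in> e" "y \<notin> V - S" by auto
        then have yS: "y \<in> S" using sub e by auto
        obtain z where z: "z \<in> e" "z \<notin> S" using Sind e by auto
        then have zV: "z \<in> V - S" using sub e by auto
        have "\<phi> y = Suc n" using yS by (simp add: \<phi>)
        moreover have "\<phi> z \<le> n" using zV z \<psi>1 by (auto simp: \<phi> PiE_def Pi_def)
        ultimately have ne: "\<phi> y \<noteq> \<phi> z" by simp
        have im: "\<phi> y \<in> \<phi> ` e" "\<phi> z \<in> \<phi> ` e" using y z by auto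
        moreover have "finite (\<phi> ` e)" using sub e fin by (meson finite_imageI finite_subset)
        ultimately show ?thesis using card_le_Suc0_iff_eq[of "\<phi> ` e"] ne im by (metis One_nat_def not_less)
      qed
      show "\<phi> \<in> ?B" using 1 2 3 S by (auto simp: weak_colourings_def)
    qed
    show "g ` ?B \<subseteq> ?A"
    proof
      fix a assume "a \<in> g ` ?B"
      then obtain \<phi> where \<phi>: "\<phi> \<in> weak_colourings V E (Suc n)" "P {x\<in>V. \<phi> x = Suc n}" and a: "a = g \<phi>" by auto
      define S where "S = {x\<in>V. \<phi> x = Suc n}"
      have \<phi>1: "\<phi> \<in> V \<rightarrow>\<^sub>E {1..Suc n}" and \<phi>2: "\<forall>e\<in>E. card (\<phi> ` e) > 1"
        using \<phi> by (auto simp: weak_colourings_def)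
      have ind: "S \<in> indep_sets V E"
      proof -
        have "\<not> e \<subseteq> S" if "e \<in> E" for e
        proof
          assume "e \<subseteq> S"
          then have "\<phi> ` e \<subseteq> {Suc n}" by (auto simp: S_def)
          then have "card (\<phi> ` e) \<le> 1" using card_mono[of "{Suc n}" "\<phi> ` e"] by simp
          then show False using \<phi>2 that by auto
        qed
        then show ?thesis by (auto simp: indep_sets_def induced_edges_def S_def)
      qed
      have r: "restrict \<phi> (V - S) \<in> weak_colourings (V - S) (induced_edges E (V - S)) n"
      proof -
        have "restrict \<phi> (V - S) \<in> (V - S) \<rightarrow>\<^sub>E {1..n}"
        proof (rule restrict_PiE_iff[THEN iffD2], intro ballI)
          fix x assume "x \<in> V - S"
          then have "\<phi> x \<in> {1..Suc n}" "\<phi> x \<noteq> Suc n" using \<phi>1 by (auto simp: S_def)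
          then show "\<phi> x \<in> {1..n}" by auto
        qed
        moreover have "card (restrict \<phi> (V - S) ` e) > 1" if "e \<in> E" "e \<subseteq> V - S" for e
        proof -
          have "restrict \<phi> (V - S) ` e = \<phi> ` e" using that by auto
          then show ?thesis using \<phi>2 that by simp
        qed
        ultimately show ?thesis by (auto simp: weak_colourings_def induced_edges_def)
      qed
      show "a \<in> ?A" using a ind r \<phi>(2) by (auto simp: g_def S_def)
    qed
  qed
  then have c: "card ?A = card ?B" by (rule bij_betw_same_card)
  have "card ?A = (\<Sum>S\<in>{S\<in>indep_sets V E. P S}. card (weak_colourings (V - S) (induced_edges E (V - S)) n))"
    using fin by (subst card_SigmaI) (auto intro: wc_finite indep_finite finite_subset[OF _ indep_finite[OF fin]])
  then show ?thesis using c by simp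
qed



definition sw :: "nat \<Rightarrow> nat \<Rightarrow> nat \<Rightarrow> nat" where
  "sw a b x = (if x = a then b else if x = b then a else x)"

lemma sw_inv[simp]: "sw a b (sw a b x) = x" by (simp add: sw_def)
lemma sw_inj: "inj_on (sw a b) A" by (metis inj_onI sw_inv)

lemma sw_map:
  assumes "c \<in> {1..m}" "\<forall>e\<in>E. e \<subseteq> V" "\<phi> \<in> weak_colourings V E m"
  shows "(\<lambda>x. if x \<in> V then sw c m (\<phi> x) else undefined) \<in> weak_colourings V E m"
proof -
  let ?f = "(\<lambda>x. if x \<in> V then sw c m (\<phi> x) else undefined)"
  have 1: "\<phi> \<in> V \<rightarrow>\<^sub>E {1..m}" "\<forall>e\<in>E. card (\<phi> ` e) > 1" using assms by (auto simp: weak_colourings_def)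
  have P1: "?f \<in> V \<rightarrow>\<^sub>E {1..m}"
  proof (rule PiE_I)
    fix x assume "x \<in> V"
    then have "\<phi> x \<in> {1..m}" using 1 by auto
    then show "?f x \<in> {1..m}" using \<open>x \<in> V\<close> assms(1) by (simp add: sw_def)
  qed simp
  have P2: "card (?f ` e) > 1" if "e \<in> E" for e
  proof -
    have "?f ` e = (\<lambda>x. sw c m (\<phi> x)) ` e" using assms(2) that by (intro image_cong) auto
    also have "\<dots> = sw c m ` \<phi> ` e" by (simp add: image_image)
    finally have eq: "?f ` e = sw c m ` \<phi> ` e" .
    have A: "card (sw c m ` \<phi> ` e) = card (\<phi> ` e)" by (rule card_image[OF sw_inj])
    have B: "card (?f ` e) = card (\<phi> ` e)" using eq A by (rule trans[OF arg_cong[where f=card]])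
    have "1 < card (\<phi> ` e)" using 1(2) that by blast
    then show ?thesis using B by linarith
  qed
  show ?thesis unfolding weak_colourings_def by (rule CollectI, rule conjI[OF P1], rule ballI, rule P2)
qed



lemma colour_sym:
  assumes c: "c \<in> {1..m}" and v: "v \<in> V" and sub: "\<forall>e\<in>E. e \<subseteq> V"
  shows "card {\<phi>\<in>weak_colourings V E m. \<phi> v = c} = card {\<phi>\<in>weak_colourings V E m. \<phi> v = m}"
proof -
  define f where "f = (\<lambda>\<phi> x. if x \<in> V then sw c m (\<phi> x) else undefined)"
  have "bij_betw f {\<phi>\<in>weak_colourings V E m. \<phi> v = c} {\<phi>\<in>weak_colourings V E m. \<phi> v = m}"
  proof (rule bij_betw_byWitness[where f'=f])
    have ext: "f (f \<phi>) = \<phi>" if "\<phi> \<in> weak_colourings V E m" for \<phi>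
    proof -
      have "\<phi> \<in> V \<rightarrow>\<^sub>E {1..m}" using that unfolding weak_colourings_def by blast
      note A = this
      show ?thesis
      proof (rule ext)
        fix x show "f (f \<phi>) x = \<phi> x"
          using PiE_arb[OF A, of x] unfolding f_def by (cases "x \<in> V") simp_all
      qed
    qed
    show "\<forall>a\<in>{\<phi>\<in>weak_colourings V E m. \<phi> v = c}. f (f a) = a" using ext by auto
    show "\<forall>a\<in>{\<phi>\<in>weak_colourings V E m. \<phi> v = m}. f (f a) = a" using ext by auto
    have fw: "f \<phi> \<in> weak_colourings V E m" if "\<phi> \<in> weak_colourings V E m" for \<phi>
      unfolding f_def by (rule sw_map[OF c sub that])
    have fv: "f \<phi> v = sw c m (\<phi> v)" for \<phi> using v by (simp add: f_def)
    show "f ` {\<phi>\<in>weak_colourings V E m. \<phi> v = c} \<subseteq> {\<phi>\<in>weak_colourings V E m. \<phi> v = m}"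
      using fw fv by (auto simp: sw_def)
    show "f ` {\<phi>\<in>weak_colourings V E m. \<phi> v = m} \<subseteq> {\<phi>\<in>weak_colourings V E m. \<phi> v = c}"
      using fw fv by (auto simp: sw_def)
  qed
  then show ?thesis by (rule bij_betw_same_card)
qed



lemma colour_count:
  assumes v: "v \<in> V" and sub: "\<forall>e\<in>E. e \<subseteq> V" and fin: "finite V"
  shows "card (weak_colourings V E m) = m * card {\<phi>\<in>weak_colourings V E m. \<phi> v = m}"
proof -
  have A: "weak_colourings V E m = (\<Union>c\<in>{1..m}. {\<phi>\<in>weak_colourings V E m. \<phi> v = c})"
  proof (intro equalityI subsetI)
    fix \<phi> assume h: "\<phi> \<in> weak_colourings V E m"
    then have "\<phi> \<in> V \<rightarrow>\<^sub>E {1..m}" unfolding weak_colourings_def by blast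
    then have "\<phi> v \<in> {1..m}" using v by (rule PiE_mem)
    then show "\<phi> \<in> (\<Union>c\<in>{1..m}. {\<phi>\<in>weak_colourings V E m. \<phi> v = c})" using h by blast
  qed blast
  have B: "card (\<Union>c\<in>{1..m}. {\<phi>\<in>weak_colourings V E m. \<phi> v = c}) = (\<Sum>c\<in>{1..m}. card {\<phi>\<in>weak_colourings V E m. \<phi> v = c})"
  proof (rule card_UN_disjoint)
    show "\<forall>i\<in>{1..m}. finite {\<phi>\<in>weak_colourings V E m. \<phi> v = i}"
      by (intro ballI finite_subset[OF _ wc_finite[OF fin]]) blast
  qed blast+
  have "card (weak_colourings V E m) = (\<Sum>c\<in>{1..m}. card {\<phi>\<in>weak_colourings V E m. \<phi> v = c})"
    using arg_cong[OF A, of card] B by (rule trans)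
  also have "\<dots> = (\<Sum>c\<in>{1..m}. card {\<phi>\<in>weak_colourings V E m. \<phi> v = m})"
    by (intro sum.cong refl colour_sym[OF _ v sub])
  finally show ?thesis by simp
qed



lemma wc_empty_V: "weak_colourings {} E n = weak_colourings {} E 0"
  unfolding weak_colourings_def by simp

lemma wc_zero: "V \<noteq> {} \<Longrightarrow> weak_colourings V E 0 = {}"
  unfolding weak_colourings_def by (auto simp: PiE_iff)

lemma cp_exists:
  assumes "finite V" "\<forall>e\<in>E. e \<subseteq> V"
  shows "\<exists>p::int poly. \<forall>n. poly p (int n) = int (card (weak_colourings V E n))"
  using assms
proof (induction "card V" arbitrary: V E rule: less_induct)
  case less
  show ?case
  proof (cases "V = {}")
    case True
    show ?thesis
    proof (rule exI[of _ "[:int (card (weak_colourings V E 0)):]"], intro allI)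
      fix n show "poly [:int (card (weak_colourings V E 0)):] (int n) = int (card (weak_colourings V E n))"
        using wc_empty_V[of E n] True by simp
    qed
  next
    case False
    then obtain v where v: "v \<in> V" by auto
    define SS where "SS = {S \<in> indep_sets V E. v \<in> S}"
    have "\<forall>S\<in>SS. \<exists>p::int poly. \<forall>n. poly p (int n) = int (card (weak_colourings (V - S) (induced_edges E (V - S)) n))"
    proof
      fix S assume S: "S \<in> SS"
      then have "S \<subseteq> V" "v \<in> S" by (auto simp: SS_def indep_sets_def)
      then have "card (V - S) < card V" using less.prems(1) v
        by (metis Diff_iff Diff_subset psubsetI psubset_card_mono)
      moreover have "finite (V - S)" using less.prems(1) by simp
      moreover have "\<forall>e\<in>induced_edges E (V - S). e \<subseteq> V - S" by (simp add: induced_edges_def)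
      ultimately show "\<exists>p::int poly. \<forall>n. poly p (int n) = int (card (weak_colourings (V - S) (induced_edges E (V - S)) n))"
        by (rule less.hyps)
    qed
    then obtain q where q: "\<forall>S\<in>SS. \<forall>n. poly (q S) (int n) = int (card (weak_colourings (V - S) (induced_edges E (V - S)) n))"
      by metis
    define p where "p = [:0,1:] * (\<Sum>S\<in>SS. pcompose (q S) [:-1,1:])"
    show ?thesis
    proof (intro exI allI)
      fix n show "poly p (int n) = int (card (weak_colourings V E n))"
      proof (cases n)
        case 0 then show ?thesis using wc_zero[OF False, of E] by (simp add: p_def)
      next
        case (Suc m)
        have "card (weak_colourings V E (Suc m)) = Suc m * card {\<phi>\<in>weak_colourings V E (Suc m). \<phi> v = Suc m}"
          by (rule colour_count[OF v less.prems(2) less.prems(1)])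
        also have "{\<phi>\<in>weak_colourings V E (Suc m). \<phi> v = Suc m} = {\<phi>\<in>weak_colourings V E (Suc m). (\<lambda>S. v \<in> S) {x\<in>V. \<phi> x = Suc m}}"
          using v by auto
        also have "card \<dots> = (\<Sum>S\<in>SS. card (weak_colourings (V - S) (induced_edges E (V - S)) m))"
          unfolding SS_def by (rule colour_split[OF less.prems(1) less.prems(2)])
        finally have c: "int (card (weak_colourings V E (Suc m))) = int (Suc m) * (\<Sum>S\<in>SS. int (card (weak_colourings (V - S) (induced_edges E (V - S)) m)))"
          by (simp only: of_nat_mult of_nat_sum)
        have "poly p (int n) = int (Suc m) * (\<Sum>S\<in>SS. poly (q S) (int m))"
          by (simp add: p_def poly_sum poly_pcompose Suc)
        also have "\<dots> = int (card (weak_colourings V E n))"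
          unfolding Suc c using q by simp
        finally show ?thesis .
      qed
    qed
  qed
qed



lemma poly_eq_nat:
  fixes p q :: "int poly"
  assumes "\<forall>n. poly p (int (Suc n)) = poly q (int (Suc n))"
  shows "p = q"
proof (rule ccontr)
  assume "p \<noteq> q" then have "p - q \<noteq> 0" by simp
  then have F: "finite {x. poly (p - q) x = 0}" by (rule poly_roots_finite)
  have S: "range (\<lambda>n. int (Suc n)) \<subseteq> {x. poly (p - q) x = 0}" using assms by auto
  have "inj (\<lambda>n::nat. int (Suc n))" by (simp add: inj_def)
  then have I: "infinite (range (\<lambda>n. int (Suc n)))" by (rule range_inj_infinite)
  from S F have "finite (range (\<lambda>n. int (Suc n)))" by (rule finite_subset)
  with I show False by contradiction
qed


lemma chrom_poly_eval:
  assumes "finite V" "\<forall>e\<in>E. e \<subseteq> V"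
  shows "poly (chrom_poly V E) (int n) = int (card (weak_colourings V E n))"
proof -
  obtain p where p: "\<forall>n. poly p (int n) = int (card (weak_colourings V E n))" using cp_exists[OF assms] by blast
  define P where "P = (\<lambda>p::int poly. \<forall>n::nat. n \<ge> 1 \<longrightarrow> poly p (int n) = int (card (weak_colourings V E n)))"
  have C: "chrom_poly V E = (THE p. P p)" unfolding chrom_poly_def P_def by (rule refl)
  have Pp: "P p" unfolding P_def by (intro allI impI) (rule p[rule_format])
  have uniq: "q = p" if q: "P q" for q
  proof (rule poly_eq_nat, intro allI)
    fix n have "poly q (int (Suc n)) = int (card (weak_colourings V E (Suc n)))" using q[unfolded P_def, rule_format, of "Suc n"] by simp
    then show "poly q (int (Suc n)) = poly p (int (Suc n))" using p[rule_format, of "Suc n"] by (rule trans[OF _ sym])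
  qed
  have "chrom_poly V E = p" unfolding C using Pp uniq by (rule the_equality)
  then show ?thesis using p by simp
qed



lemma wc_product:
  assumes disj: "U1 \<inter> U2 = {}" and split: "\<forall>e\<in>E. e \<subseteq> U1 \<or> e \<subseteq> U2"
  shows "card (weak_colourings (U1 \<union> U2) E n) =
    card (weak_colourings U1 (induced_edges E U1) n) * card (weak_colourings U2 (induced_edges E U2) n)"
proof -
  let ?A = "weak_colourings (U1 \<union> U2) E n"
  let ?B = "weak_colourings U1 (induced_edges E U1) n \<times> weak_colourings U2 (induced_edges E U2) n"
  define f where "f = (\<lambda>\<phi>::'a\<Rightarrow>nat. (restrict \<phi> U1, restrict \<phi> U2))"
  define g where "g = (\<lambda>(a::'a\<Rightarrow>nat, b::'a\<Rightarrow>nat). (\<lambda>x. if x \<in> U1 then a x else b x))"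
  have "bij_betw f ?A ?B"
  proof (rule bij_betw_byWitness[where f'=g])
    show "\<forall>\<phi>\<in>?A. g (f \<phi>) = \<phi>"
    proof
      fix \<phi> assume "\<phi> \<in> ?A"
      then have P: "\<phi> \<in> (U1 \<union> U2) \<rightarrow>\<^sub>E {1..n}" unfolding weak_colourings_def by blast
      show "g (f \<phi>) = \<phi>"
      proof (rule ext)
        fix x show "g (f \<phi>) x = \<phi> x"
          using PiE_arb[OF P, of x] by (cases "x \<in> U1"; cases "x \<in> U2") (simp_all add: f_def g_def)
      qed
    qed
    show "\<forall>ab\<in>?B. f (g ab) = ab"
    proof
      fix ab assume "ab \<in> ?B"
      then obtain a b where ab: "ab = (a, b)" and a: "a \<in> U1 \<rightarrow>\<^sub>E {1..n}" and b: "b \<in> U2 \<rightarrow>\<^sub>E {1..n}"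
        unfolding weak_colourings_def by blast
      have 1: "restrict (\<lambda>x. if x \<in> U1 then a x else b x) U1 = a"
      proof (rule ext)
        fix x show "restrict (\<lambda>x. if x \<in> U1 then a x else b x) U1 x = a x"
          using PiE_arb[OF a, of x] by (cases "x \<in> U1") simp_all
      qed
      have 2: "restrict (\<lambda>x. if x \<in> U1 then a x else b x) U2 = b"
      proof (rule ext)
        fix x show "restrict (\<lambda>x. if x \<in> U1 then a x else b x) U2 x = b x"
          using PiE_arb[OF b, of x] disj by (cases "x \<in> U2") auto
      qed
      show "f (g ab) = ab" using 1 2 by (simp add: ab f_def g_def)
    qed
    show "f ` ?A \<subseteq> ?B"
    proof
      fix ab assume "ab \<in> f ` ?A"
      then obtain \<phi> where \<phi>: "\<phi> \<in> ?A" and ab: "ab = f \<phi>" by blast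
      have P: "\<phi> \<in> (U1 \<union> U2) \<rightarrow>\<^sub>E {1..n}" and Q: "\<forall>e\<in>E. 1 < card (\<phi> ` e)"
        using \<phi> unfolding weak_colourings_def by blast+
      have "restrict \<phi> U \<in> weak_colourings U (induced_edges E U) n" if U: "U = U1 \<or> U = U2" for U
      proof -
        have "restrict \<phi> U \<in> U \<rightarrow>\<^sub>E {1..n}"
          using P U by (auto simp: restrict_PiE_iff PiE_iff)
        moreover have "1 < card (restrict \<phi> U ` e)" if e: "e \<in> induced_edges E U" for e
        proof -
          have "e \<in> E" "e \<subseteq> U" using e by (auto simp: induced_edges_def)
          then have "restrict \<phi> U ` e = \<phi> ` e" by auto
          then show ?thesis using Q \<open>e \<in> E\<close> by simp
        qed
        ultimately show ?thesis unfolding weak_colourings_def by blast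
      qed
      then show "ab \<in> ?B" unfolding ab f_def by blast
    qed
    show "g ` ?B \<subseteq> ?A"
    proof
      fix \<phi> assume "\<phi> \<in> g ` ?B"
      then obtain a b where \<phi>: "\<phi> = g (a, b)" and a: "a \<in> weak_colourings U1 (induced_edges E U1) n"
        and b: "b \<in> weak_colourings U2 (induced_edges E U2) n" by blast
      have a1: "a \<in> U1 \<rightarrow>\<^sub>E {1..n}" and a2: "\<forall>e\<in>induced_edges E U1. 1 < card (a ` e)"
        using a unfolding weak_colourings_def by blast+
      have b1: "b \<in> U2 \<rightarrow>\<^sub>E {1..n}" and b2: "\<forall>e\<in>induced_edges E U2. 1 < card (b ` e)"
        using b unfolding weak_colourings_def by blast+
      have g: "\<phi> x = (if x \<in> U1 then a x else b x)" for x by (simp add: \<phi> g_def)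
      have "\<phi> \<in> (U1 \<union> U2) \<rightarrow>\<^sub>E {1..n}"
      proof (rule PiE_I)
        fix x assume "x \<in> U1 \<union> U2"
        then show "\<phi> x \<in> {1..n}" using g[of x] PiE_mem[OF a1, of x] PiE_mem[OF b1, of x] by auto
      next
        fix x assume "x \<notin> U1 \<union> U2"
        then show "\<phi> x = undefined" using g[of x] PiE_arb[OF b1, of x] by auto
      qed
      moreover have "1 < card (\<phi> ` e)" if e: "e \<in> E" for e
      proof (cases "e \<subseteq> U1")
        case True
        then have "\<phi> ` e = a ` e" using g by auto
        moreover have "e \<in> induced_edges E U1" using e True by (simp add: induced_edges_def)
        ultimately show ?thesis using a2 by simp
      next
        case False
        then have "e \<subseteq> U2" using split e by blast
        then have "\<phi> ` e = b ` e" using g disj False by (auto intro!: image_cong)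
        moreover have "e \<in> induced_edges E U2" using e \<open>e \<subseteq> U2\<close> by (simp add: induced_edges_def)
        ultimately show ?thesis using b2 by simp
      qed
      ultimately show "\<phi> \<in> ?A" unfolding weak_colourings_def by blast
    qed
  qed
  then have "card ?A = card ?B" by (rule bij_betw_same_card)
  then show ?thesis by (simp add: card_cartesian_product)
qed



lemma shift_dvd:
  fixes p :: "int poly"
  shows "[:-1, 1:] ^ 2 dvd p \<longleftrightarrow> [:0, 1:] ^ 2 dvd pcompose p [:1, 1:]"
proof
  have e1: "pcompose ([:-1,1:]^2) [:1,1:] = ([:0,1:]^2 :: int poly)"
    by (simp add: power2_eq_square pcompose_mult pcompose_pCons)
  assume "[:-1, 1:] ^ 2 dvd p"
  then obtain k where "p = [:-1, 1:] ^ 2 * k" by (rule dvdE)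
  then have "pcompose p [:1, 1:] = [:0,1:]^2 * pcompose k [:1,1:]" by (simp add: pcompose_mult e1)
  then show "[:0, 1:] ^ 2 dvd pcompose p [:1, 1:]" by (rule dvdI)
next
  have e2: "pcompose ([:0,1:]^2) [:-1,1:] = ([:-1,1:]^2 :: int poly)"
    by (simp add: power2_eq_square pcompose_mult pcompose_pCons)
  have e3: "pcompose [:1,1:] [:-1,1:] = ([:0,1:] :: int poly)"
    by (simp add: pcompose_pCons)
  have inv: "pcompose (pcompose p [:1,1:]) [:-1,1:] = p"
    by (simp add: pcompose_assoc[symmetric] e3)
  assume "[:0, 1:] ^ 2 dvd pcompose p [:1, 1:]"
  then obtain k where "pcompose p [:1, 1:] = [:0, 1:] ^ 2 * k" by (rule dvdE)
  then have "pcompose (pcompose p [:1,1:]) [:-1,1:] = [:-1,1:]^2 * pcompose k [:-1,1:]"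
    by (simp add: pcompose_mult e2)
  then have "p = [:-1,1:]^2 * pcompose k [:-1,1:]" using inv by simp
  then show "[:-1, 1:] ^ 2 dvd p" by (rule dvdI)
qed

lemma coprime_dvd:
  fixes A :: "int poly"
  shows "[:0, 1:] ^ 2 dvd [:1, 1:] * A \<longleftrightarrow> [:0, 1:] ^ 2 dvd A"
proof
  assume h: "[:0, 1:] ^ 2 dvd [:1, 1:] * A"
  show "[:0, 1:] ^ 2 dvd A"
  proof (cases "A = 0")
    case True then show ?thesis by simp
  next
    case False
    have ne: "[:1, 1::int:] \<noteq> 0" by simp
    have nz: "[:1, 1:] * A \<noteq> 0" by (rule no_zero_divisors[OF ne False])
    have "order 0 [:1, 1::int:] = (0::nat)"
    proof (rule ccontr)
      assume "order 0 [:1, 1::int:] \<noteq> (0::nat)"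
      then have "poly [:1, 1::int:] 0 = 0" using order_root[of "[:1,1::int:]" 0] by blast
      then show False by simp
    qed
    then have o: "order 0 ([:1, 1:] * A) = order 0 A" using order_mult[OF nz] by simp
    have "2 \<le> order 0 ([:1, 1:] * A)" using h nz order_divides[of 0 2 "[:1, 1:] * A"] by simp
    then have "2 \<le> order 0 A" using o by simp
    then show ?thesis using order_divides[of 0 2 A] by simp
  qed
next
  assume "[:0, 1:] ^ 2 dvd A"
  then show "[:0, 1:] ^ 2 dvd [:1, 1:] * A" by (rule dvd_mult)
qed



theorem proposition9:
  fixes V :: "'a set" and E :: "'a set set" and w :: 'a and V1 V2 :: "'a set"
  assumes "hypergraph V E"
    and "hg_connected V E"
    and "w \<in> V"
    and "V1 \<subset> V" and "V2 \<subset> V"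
    and "V1 \<union> V2 = V" and "V1 \<inter> V2 = {w}"
    and "\<forall>e\<in>E. w \<in> e \<or> e \<subseteq> V1 \<or> e \<subseteq> V2"
  shows "[:-1, 1:] ^ 2 dvd chrom_poly V E \<longleftrightarrow>
         [:0, 1:] ^ 2 dvd (\<Sum>V0 \<in> {V0 \<in> indep_sets V E. V1 \<subseteq> V0 \<or> V2 \<subseteq> V0}.
                              chrom_poly (V - V0) (induced_edges E (V - V0)))"
proof -
  have fin: "finite V" and sub: "\<forall>e\<in>E. e \<subseteq> V" using assms(1) by (auto simp: hypergraph_def)
  have wV1: "w \<in> V1" and wV2: "w \<in> V2" using assms(7) by auto
  have V1V: "V1 \<subseteq> V" and V2V: "V2 \<subseteq> V" using assms(4,5) by auto
  define Q where "Q = (\<lambda>S. chrom_poly (V - S) (induced_edges E (V - S)))"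
  have Qev: "poly (Q S) (int n) = int (card (weak_colourings (V - S) (induced_edges E (V - S)) n))" for S n
    unfolding Q_def by (rule chrom_poly_eval) (use fin in \<open>auto simp: induced_edges_def\<close>)
  define AA where "AA = {S \<in> indep_sets V E. w \<in> S}"
  define TT where "TT = {V0 \<in> indep_sets V E. V1 \<subseteq> V0 \<or> V2 \<subseteq> V0}"
  define A where "A = (\<Sum>S\<in>AA. Q S)"
  define T where "T = (\<Sum>S\<in>TT. Q S)"
  have finAA: "finite AA" unfolding AA_def by (rule finite_subset[OF _ indep_finite[OF fin]]) blast
  have step2: "pcompose (chrom_poly V E) [:1, 1:] = [:1, 1:] * A"
  proof (rule poly_eq_nat, intro allI)
    fix n
    let ?m = "Suc n"
    have "card (weak_colourings V E (Suc ?m)) = Suc ?m * card {\<phi>\<in>weak_colourings V E (Suc ?m). \<phi> w = Suc ?m}"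
      by (rule colour_count[OF assms(3) sub fin])
    also have "{\<phi>\<in>weak_colourings V E (Suc ?m). \<phi> w = Suc ?m} = {\<phi>\<in>weak_colourings V E (Suc ?m). (\<lambda>S. w \<in> S) {x\<in>V. \<phi> x = Suc ?m}}"
      using assms(3) by auto
    also have "card \<dots> = (\<Sum>S\<in>AA. card (weak_colourings (V - S) (induced_edges E (V - S)) ?m))"
      unfolding AA_def by (rule colour_split[OF fin sub])
    finally have c: "int (card (weak_colourings V E (Suc ?m))) = int (Suc ?m) * (\<Sum>S\<in>AA. int (card (weak_colourings (V - S) (induced_edges E (V - S)) ?m)))"
      by (simp only: of_nat_mult of_nat_sum)
    have "poly (pcompose (chrom_poly V E) [:1, 1:]) (int ?m) = poly (chrom_poly V E) (int (Suc ?m))"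
      by (simp add: poly_pcompose add.commute)
    also have "\<dots> = int (card (weak_colourings V E (Suc ?m)))" by (rule chrom_poly_eval[OF fin sub])
    also have "\<dots> = int (Suc ?m) * (\<Sum>S\<in>AA. poly (Q S) (int ?m))" unfolding c Qev ..
    also have "\<dots> = poly ([:1, 1:] * A) (int ?m)" by (simp add: A_def poly_sum algebra_simps)
    finally show "poly (pcompose (chrom_poly V E) [:1, 1:]) (int ?m) = poly ([:1, 1:] * A) (int ?m)" .
  qed
  have step3: "[:0, 1:] ^ 2 dvd Q S" if S: "S \<in> AA - TT" for S
  proof -
    have SV: "S \<subseteq> V" and wS: "w \<in> S" and n1: "\<not> V1 \<subseteq> S" and n2: "\<not> V2 \<subseteq> S"
      using S by (auto simp: AA_def TT_def indep_sets_def)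
    define U1 where "U1 = V1 - S"
    define U2 where "U2 = V2 - S"
    define E' where "E' = induced_edges E (V - S)"
    have U: "V - S = U1 \<union> U2" using assms(6) by (auto simp: U1_def U2_def)
    have disj: "U1 \<inter> U2 = {}" using assms(7) wS by (auto simp: U1_def U2_def)
    have spl: "\<forall>e\<in>E'. e \<subseteq> U1 \<or> e \<subseteq> U2"
    proof
      fix e assume "e \<in> E'"
      then have e: "e \<in> E" "e \<subseteq> V - S" by (auto simp: E'_def induced_edges_def)
      then have "w \<notin> e" using wS by auto
      then have "e \<subseteq> V1 \<or> e \<subseteq> V2" using assms(8) e(1) by blast
      then show "e \<subseteq> U1 \<or> e \<subseteq> U2" using e(2) by (auto simp: U1_def U2_def)
    qed
    have finU1: "finite U1" and finU2: "finite U2" using fin V1V V2V by (auto simp: U1_def U2_def intro: finite_subset)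
    define Q1 where "Q1 = chrom_poly U1 (induced_edges E' U1)"
    define Q2 where "Q2 = chrom_poly U2 (induced_edges E' U2)"
    have ev1: "poly Q1 (int n) = int (card (weak_colourings U1 (induced_edges E' U1) n))" for n
      unfolding Q1_def by (rule chrom_poly_eval[OF finU1]) (auto simp: induced_edges_def)
    have ev2: "poly Q2 (int n) = int (card (weak_colourings U2 (induced_edges E' U2) n))" for n
      unfolding Q2_def by (rule chrom_poly_eval[OF finU2]) (auto simp: induced_edges_def)
    have prod: "Q S = Q1 * Q2"
    proof (rule poly_eq_nat, intro allI)
      fix n
      have "poly (Q S) (int (Suc n)) = int (card (weak_colourings (U1 \<union> U2) E' (Suc n)))"
        unfolding Qev U[symmetric] E'_def ..
      also have "\<dots> = poly (Q1 * Q2) (int (Suc n))"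
        unfolding wc_product[OF disj spl] poly_mult ev1 ev2 by simp
      finally show "poly (Q S) (int (Suc n)) = poly (Q1 * Q2) (int (Suc n))" .
    qed
    have ne1: "U1 \<noteq> {}" using n1 by (auto simp: U1_def)
    have ne2: "U2 \<noteq> {}" using n2 by (auto simp: U2_def)
    have "poly Q1 0 = 0" using ev1[of 0] wc_zero[OF ne1] by simp
    then have d1: "[:0, 1:] dvd Q1" using poly_eq_0_iff_dvd[of Q1 0] by simp
    have "poly Q2 0 = 0" using ev2[of 0] wc_zero[OF ne2] by simp
    then have d2: "[:0, 1:] dvd Q2" using poly_eq_0_iff_dvd[of Q2 0] by simp
    have "[:0, 1:] * [:0, 1:] dvd Q1 * Q2" using d1 d2 by (rule mult_dvd_mono)
    then show ?thesis unfolding prod by (simp add: power2_eq_square)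
  qed
  have TTsub: "TT \<subseteq> AA" using wV1 wV2 by (auto simp: TT_def AA_def)
  have "A = (\<Sum>S\<in>AA - TT. Q S) + T"
    unfolding A_def T_def by (rule sum.subset_diff[OF TTsub finAA])
  moreover have "[:0, 1:] ^ 2 dvd (\<Sum>S\<in>AA - TT. Q S)" by (rule dvd_sum) (rule step3)
  ultimately have AT: "[:0, 1:] ^ 2 dvd A \<longleftrightarrow> [:0, 1:] ^ 2 dvd T" by (simp add: dvd_add_right_iff)
  have "[:-1, 1:] ^ 2 dvd chrom_poly V E \<longleftrightarrow> [:0, 1:] ^ 2 dvd A"
    unfolding shift_dvd step2 coprime_dvd ..
  also have "\<dots> \<longleftrightarrow> [:0, 1:] ^ 2 dvd T" by (rule AT)
  finally show ?thesis unfolding T_def TT_def Q_def .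
qed


end
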